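(* Let $n\geq 2$. In any presentation of the ring $\mathrm{Mat}_n(\mathbb{Z})$ (as a unital associative ring) by generators and relations, i.e. any isomorphism $\mathrm{Mat}_n(\mathbb{Z})\cong\mathbb{Z}\langle S\rangle/I$ where $\mathbb{Z}\langle S\rangle$ is the free unital associative ring on a finite set $S$ and $I$ is the two-sided ideal generated by a set of relations, the number of relations is at least the number $|S|$ of generators.
   Context: All rings are associative with unit; presentations are in the category of unital associative rings. *)

theory Defs
  imports "HOL-Algebra.QuotRing" "Jordan_Normal_Form.Matrix"
begin

text \<open>The free unital associative ring Z<S> on a set S of generators:
  integer-valued functions on words (lists) of letters from S with finite
  support, added pointwise and multiplied by convolution along concatenation.\<close>

definition free_ring :: "'a set \<Rightarrow> ('a list \<Rightarrow> int) ring" where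
  "free_ring S = \<lparr>carrier = {f. finite {w. f w \<noteq> 0} \<and> (\<forall>w. f w \<noteq> 0 \<longrightarrow> set w \<subseteq> S)},
     monoid.mult = (\<lambda>f g w. \<Sum>i\<le>length w. f (take i w) * g (drop i w)),
     monoid.one = (\<lambda>w. if w = [] then 1 else 0),
     ring.zero = (\<lambda>w. 0),
     ring.add = (\<lambda>f g w. f w + g w), \<dots> = ()\<rparr>"

definition Mat_Z :: "nat \<Rightarrow> int mat ring" where
  "Mat_Z n = ring_mat TYPE(int) n ()"

end

theory Submission
  imports Defs "HOL-Library.Z2"
begin

declare add_bit_eq_xor[simp del] mult_bit_eq_and[simp del] bit_not_zero_iff[simp del] bit_not_one_iff[simp del]

lemma fr_carrier: "carrier (free_ring S) = {f. finite {w. f w \<noteq> 0} \<and> (\<forall>w. f w \<noteq> 0 \<longrightarrow> set w \<subseteq> S)}"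
  by (simp add: free_ring_def)
lemma fr_add: "f \<oplus>\<^bsub>free_ring S\<^esub> g = (\<lambda>w. f w + g w)"
  by (simp add: free_ring_def)
lemma fr_mult: "f \<otimes>\<^bsub>free_ring S\<^esub> g = (\<lambda>w. \<Sum>i\<le>length w. f (take i w) * g (drop i w))"
  by (simp add: free_ring_def)
lemma fr_zero: "\<zero>\<^bsub>free_ring S\<^esub> = (\<lambda>w. 0)"
  by (simp add: free_ring_def)
lemma fr_one: "\<one>\<^bsub>free_ring S\<^esub> = (\<lambda>w. if w = [] then 1 else 0)"
  by (simp add: free_ring_def)

definition dl :: "'a list \<Rightarrow> 'a list \<Rightarrow> int" where
  "dl w = (\<lambda>x. if x = w then 1 else 0)"

lemma dl_carrier: "set w \<subseteq> S \<Longrightarrow> dl w \<in> carrier (free_ring S)"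
  by (auto simp: fr_carrier dl_def)

lemma dl_nil: "\<one>\<^bsub>free_ring S\<^esub> = dl []"
  by (auto simp: fr_one dl_def)

lemma dl_mult: "dl u \<otimes>\<^bsub>free_ring S\<^esub> dl v = dl (u @ v)"
proof
  fix x :: "'a list"
  have eq: "(dl u (take i x) * dl v (drop i x)) = (if i = length u then (if x = u @ v then 1 else 0) else 0)"
    if "i \<le> length x" for i
  proof -
    have iff: "(take i x = u \<and> drop i x = v) \<longleftrightarrow> (i = length u \<and> x = u @ v)"
      using that by (metis append_eq_conv_conj append_take_drop_id length_take min.absorb2)
    have "dl u (take i x) * dl v (drop i x) = (if take i x = u \<and> drop i x = v then 1 else 0)"
      by (simp add: dl_def)
    also have "\<dots> = (if i = length u \<and> x = u @ v then 1 else 0)" by (simp only: iff)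
    finally show ?thesis by simp
  qed
  have "(\<Sum>i\<le>length x. dl u (take i x) * dl v (drop i x))
      = (\<Sum>i\<le>length x. (if i = length u then (if x = u @ v then 1 else 0) else 0))"
    using eq by (intro sum.cong) auto
  also have "\<dots> = dl (u @ v) x"
    by (auto simp: dl_def)
  finally show "(dl u \<otimes>\<^bsub>free_ring S\<^esub> dl v) x = dl (u @ v) x"
    by (simp add: fr_mult)
qed

lemma fr_induct:
  assumes f: "f \<in> carrier (free_ring S)"
  and z: "Q (\<lambda>w. 0)"
  and up: "\<And>g w. g \<in> carrier (free_ring S) \<Longrightarrow> set w \<subseteq> S \<Longrightarrow> Q g \<Longrightarrow> Q (\<lambda>x. g x + dl w x)"
  and down: "\<And>g w. g \<in> carrier (free_ring S) \<Longrightarrow> set w \<subseteq> S \<Longrightarrow> Q (\<lambda>x. g x + dl w x) \<Longrightarrow> Q g"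
  shows "Q f"
proof -
  define m where "m = (\<lambda>f::'a list \<Rightarrow> int. \<Sum>w\<in>{w. f w \<noteq> 0}. nat \<bar>f w\<bar>)"
  have "\<forall>f. f \<in> carrier (free_ring S) \<longrightarrow> m f = k \<longrightarrow> Q f" for k
  proof (induction k rule: less_induct)
    case (less k)
    show ?case
    proof (intro allI impI)
      fix f assume fc: "f \<in> carrier (free_ring S)" and mk: "m f = k"
      have fin: "finite {w. f w \<noteq> 0}" and sup: "\<And>w. f w \<noteq> 0 \<Longrightarrow> set w \<subseteq> S"
        using fc by (auto simp: fr_carrier)
      show "Q f"
      proof (cases "\<forall>w. f w = 0")
        case True then have "f = (\<lambda>w. 0)" by auto
        thus ?thesis using z by simp
      next
        case False then obtain w where fw: "f w \<noteq> 0" by auto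
        have ws: "set w \<subseteq> S" using sup fw .
        have key: "m h < m f" if h1: "\<And>x. x \<noteq> w \<Longrightarrow> h x = f x" and h2: "\<bar>h w\<bar> < \<bar>f w\<bar>" for h
        proof -
          have sub: "{x. h x \<noteq> 0} \<subseteq> {x. f x \<noteq> 0}" using h1 fw by (smt (verit) Collect_mono)
          have "m h = (\<Sum>x\<in>{x. f x \<noteq> 0}. nat \<bar>h x\<bar>)" unfolding m_def
            by (intro sum.mono_neutral_left[OF fin sub]) auto
          also have "\<dots> < (\<Sum>x\<in>{x. f x \<noteq> 0}. nat \<bar>f x\<bar>)"
          proof (rule sum_strict_mono_ex1[OF fin])
            show "\<forall>x\<in>{x. f x \<noteq> 0}. nat \<bar>h x\<bar> \<le> nat \<bar>f x\<bar>"
            proof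
              fix x assume "x \<in> {x. f x \<noteq> 0}"
              show "nat \<bar>h x\<bar> \<le> nat \<bar>f x\<bar>"
              proof (cases "x = w")
                case True thus ?thesis using h2 by simp
              next
                case False thus ?thesis using h1[OF False] by simp
              qed
            qed
            show "\<exists>a\<in>{x. f x \<noteq> 0}. nat \<bar>h a\<bar> < nat \<bar>f a\<bar>"
              using fw h2 by (intro bexI[of _ w]) auto
          qed
          finally show ?thesis unfolding m_def .
        qed
        have gcar: "g \<in> carrier (free_ring S)" if "\<And>x. x \<noteq> w \<Longrightarrow> g x = f x" for g
        proof -
          have "{x. g x \<noteq> 0} \<subseteq> insert w {x. f x \<noteq> 0}" using that by auto
          hence "finite {x. g x \<noteq> 0}" using fin finite_subset by blast
          moreover have "set x \<subseteq> S" if "g x \<noteq> 0" for x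
            using that \<open>\<And>x. x \<noteq> w \<Longrightarrow> g x = f x\<close> sup ws by (cases "x = w") auto
          ultimately show ?thesis by (auto simp: fr_carrier)
        qed
        show ?thesis
        proof (cases "f w > 0")
          case True
          define g where "g = f(w := f w - 1)"
          have gc: "g \<in> carrier (free_ring S)" by (rule gcar) (simp add: g_def)
          have feq: "f = (\<lambda>x. g x + dl w x)" by (auto simp: g_def dl_def)
          have "m g < k" using key[of g] True mk by (auto simp: g_def)
          hence "Q g" using less.IH gc by blast
          then show ?thesis using up[OF gc ws] feq by simp
        next
          case False
          define g where "g = (\<lambda>x. f x + dl w x)"
          have gc: "g \<in> carrier (free_ring S)" by (rule gcar) (simp add: g_def dl_def)
          have "m g < k" using key[of g] False fw mk by (auto simp: g_def dl_def)
          hence "Q g" using less.IH gc by blast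
          then show ?thesis using down[OF fc ws] by (simp add: g_def)
        qed
      qed
    qed
  qed
  thus ?thesis using f by blast
qed



primrec Dw :: "('a list \<Rightarrow> bit mat) \<Rightarrow> nat \<Rightarrow> ('a \<Rightarrow> bit mat) \<Rightarrow> 'a list \<Rightarrow> bit mat" where
  "Dw P n X [] = 0\<^sub>m n n"
| "Dw P n X (a # w) = X a * P w + P [a] * Dw P n X w"

definition DD :: "('a list \<Rightarrow> bit mat) \<Rightarrow> nat \<Rightarrow> ('a \<Rightarrow> bit mat) \<Rightarrow> ('a list \<Rightarrow> int) \<Rightarrow> bit mat" where
  "DD P n X f = mat n n (\<lambda>(i,j). \<Sum>w\<in>{w. f w \<noteq> 0}. of_int (f w) * (Dw P n X w $$ (i,j)))"

lemma DD_car[simp]: "DD P n X f \<in> carrier_mat n n"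
  by (simp add: DD_def)

lemma DD_dims[simp]: "dim_row (DD P n X f) = n" "dim_col (DD P n X f) = n"
  by (simp_all add: DD_def)

lemma DD_superset:
  assumes "finite T" "{w. f w \<noteq> 0} \<subseteq> T"
  shows "DD P n X f = mat n n (\<lambda>(i,j). \<Sum>w\<in>T. of_int (f w) * (Dw P n X w $$ (i,j)))"
  unfolding DD_def
  by (rule cong[of "mat n n", OF refl], rule ext, clarsimp, rule sum.mono_neutral_left[OF assms(1,2)]) auto

lemma mat_cancel:
  fixes A B C :: "'b :: ab_group_add mat"
  assumes "A \<in> carrier_mat n m" "B \<in> carrier_mat n m" "C \<in> carrier_mat n m" "A + C = B + C"
  shows "A = B"
proof (rule eq_matI)
  fix i j assume ij: "i < dim_row B" "j < dim_col B"
  have i: "i < n" "j < m" using ij assms by auto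
  have "(A + C) $$ (i,j) = (B + C) $$ (i,j)" using assms(4) by simp
  thus "A $$ (i,j) = B $$ (i,j)" using assms(1-3) i by simp
qed (use assms in auto)

lemma mat_double_zero:
  fixes A :: "'b :: ab_group_add mat"
  assumes "A \<in> carrier_mat n m" "A = A + A"
  shows "A = 0\<^sub>m n m"
proof (rule eq_matI)
  fix i j assume ij: "i < dim_row (0\<^sub>m n m :: 'b mat)" "j < dim_col (0\<^sub>m n m :: 'b mat)"
  have i: "i < n" "j < m" using ij assms by auto
  have "A $$ (i,j) = (A + A) $$ (i,j)" using assms(2) by (rule arg_cong)
  thus "A $$ (i,j) = 0\<^sub>m n m $$ (i,j)" using assms(1) i by simp
qed (use assms in auto)

lemma addext:
  fixes Phi Psi :: "('a list \<Rightarrow> int) \<Rightarrow> 'b :: ab_group_add mat"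
  assumes aPhi: "\<And>f g. f \<in> carrier (free_ring S) \<Longrightarrow> g \<in> carrier (free_ring S) \<Longrightarrow> Phi (\<lambda>w. f w + g w) = Phi f + Phi g"
  and aPsi: "\<And>f g. f \<in> carrier (free_ring S) \<Longrightarrow> g \<in> carrier (free_ring S) \<Longrightarrow> Psi (\<lambda>w. f w + g w) = Psi f + Psi g"
  and cPhi: "\<And>f. f \<in> carrier (free_ring S) \<Longrightarrow> Phi f \<in> carrier_mat n n"
  and cPsi: "\<And>f. f \<in> carrier (free_ring S) \<Longrightarrow> Psi f \<in> carrier_mat n n"
  and base: "\<And>w. set w \<subseteq> S \<Longrightarrow> Phi (dl w) = Psi (dl w)"
  and f: "f \<in> carrier (free_ring S)"
  shows "Phi f = Psi f"
  using f
proof (rule fr_induct)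
  have z: "(\<lambda>w::'a list. 0::int) \<in> carrier (free_ring S)" by (simp add: fr_carrier)
  have "Phi (\<lambda>w. 0) = Phi (\<lambda>w. 0) + Phi (\<lambda>w. 0)" using aPhi[OF z z] by simp
  hence 1: "Phi (\<lambda>w. 0) = 0\<^sub>m n n" using mat_double_zero cPhi[OF z] by blast
  have "Psi (\<lambda>w. 0) = Psi (\<lambda>w. 0) + Psi (\<lambda>w. 0)" using aPsi[OF z z] by simp
  hence 2: "Psi (\<lambda>w. 0) = 0\<^sub>m n n" using mat_double_zero cPsi[OF z] by blast
  show "Phi (\<lambda>w. 0) = Psi (\<lambda>w. 0)" using 1 2 by simp
next
  fix g w assume g: "g \<in> carrier (free_ring S)" and w: "set w \<subseteq> S"
  have d: "dl w \<in> carrier (free_ring S)" using dl_carrier[OF w] .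
  {
    assume "Phi g = Psi g"
    thus "Phi (\<lambda>x. g x + dl w x) = Psi (\<lambda>x. g x + dl w x)"
      using aPhi[OF g d] aPsi[OF g d] base[OF w] by simp
  next
    assume "Phi (\<lambda>x. g x + dl w x) = Psi (\<lambda>x. g x + dl w x)"
    hence "Phi g + Psi (dl w) = Psi g + Psi (dl w)"
      using aPhi[OF g d] aPsi[OF g d] base[OF w] by simp
    thus "Phi g = Psi g" using mat_cancel cPhi[OF g] cPsi[OF g] cPsi[OF d] by blast
  }
qed



locale mp =
  fixes S :: "'a set" and n :: nat and pi :: "('a list \<Rightarrow> int) \<Rightarrow> int mat" and Rel :: "('a list \<Rightarrow> int) set"
  assumes R_ring: "ring (free_ring S)"
  and pi_hom: "pi \<in> Ring.ring_hom (free_ring S) (Mat_Z n)"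
  and pi_surj: "\<And>m. m \<in> carrier_mat n n \<Longrightarrow> \<exists>f \<in> carrier (free_ring S). pi f = m"
  and n_pos: "0 < n"
  and Rel_car: "Rel \<subseteq> carrier (free_ring S)"
  and Rel_ker: "\<And>r. r \<in> Rel \<Longrightarrow> pi r = 0\<^sub>m n n"
  and ker_min: "\<And>I. ideal I (free_ring S) \<Longrightarrow> Rel \<subseteq> I \<Longrightarrow> {f \<in> carrier (free_ring S). pi f = 0\<^sub>m n n} \<subseteq> I"
begin

abbreviation "C \<equiv> carrier (free_ring S)"

lemma pi_car: "f \<in> C \<Longrightarrow> pi f \<in> carrier_mat n n"
  using pi_hom by (auto simp: Ring.ring_hom_def Mat_Z_def ring_mat_simps)

lemma pi_add': "f \<in> C \<Longrightarrow> g \<in> C \<Longrightarrow> pi (f \<oplus>\<^bsub>free_ring S\<^esub> g) = pi f + pi g"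
  using pi_hom by (auto simp: Ring.ring_hom_def Mat_Z_def ring_mat_simps)

lemma pi_add: "f \<in> C \<Longrightarrow> g \<in> C \<Longrightarrow> pi (\<lambda>w. f w + g w) = pi f + pi g"
  using pi_add' by (simp add: fr_add)

lemma pi_mult: "f \<in> C \<Longrightarrow> g \<in> C \<Longrightarrow> pi (f \<otimes>\<^bsub>free_ring S\<^esub> g) = pi f * pi g"
  using pi_hom by (auto simp: Ring.ring_hom_def Mat_Z_def ring_mat_simps)

lemma pi_one: "pi (dl []) = 1\<^sub>m n"
proof -
  have "pi \<one>\<^bsub>free_ring S\<^esub> = 1\<^sub>m n" using pi_hom by (simp add: Ring.ring_hom_def Mat_Z_def ring_mat_simps)
  thus ?thesis using dl_nil[of S] by metis
qed

definition pb :: "('a list \<Rightarrow> int) \<Rightarrow> bit mat" where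
  "pb f = map_mat of_int (pi f)"

definition Pw :: "'a list \<Rightarrow> bit mat" where
  "Pw w = pb (dl w)"

lemma pb_car: "f \<in> C \<Longrightarrow> pb f \<in> carrier_mat n n"
  using pi_car by (simp add: pb_def)

lemma pb_add: "f \<in> C \<Longrightarrow> g \<in> C \<Longrightarrow> pb (\<lambda>w. f w + g w) = pb f + pb g"
proof -
  assume f: "f \<in> C" and g: "g \<in> C"
  have a: "pi f \<in> carrier_mat n n" "pi g \<in> carrier_mat n n" using pi_car f g by auto
  show ?thesis unfolding pb_def pi_add[OF f g]
    by (rule eq_matI) (use a in \<open>simp_all only: index_map_mat index_add_mat carrier_matD of_int_add\<close>)
qed

lemma pb_mult: "f \<in> C \<Longrightarrow> g \<in> C \<Longrightarrow> pb (f \<otimes>\<^bsub>free_ring S\<^esub> g) = pb f * pb g"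
  unfolding pb_def pi_mult using pi_car of_int_hom.mat_hom_mult by blast

lemma Pw_car: "set w \<subseteq> S \<Longrightarrow> Pw w \<in> carrier_mat n n"
  unfolding Pw_def using pb_car dl_carrier by blast

lemma Pw_nil: "Pw [] = 1\<^sub>m n"
  unfolding Pw_def pb_def pi_one by (rule eq_matI) auto

lemma Pw_app: "set u \<subseteq> S \<Longrightarrow> set v \<subseteq> S \<Longrightarrow> Pw (u @ v) = Pw u * Pw v"
proof -
  assume u: "set u \<subseteq> S" and v: "set v \<subseteq> S"
  show ?thesis unfolding Pw_def using pb_mult[OF dl_carrier[OF u] dl_carrier[OF v]] dl_mult by metis
qed

definition XS :: "('a \<Rightarrow> bit mat) \<Rightarrow> bool" where
  "XS X \<longleftrightarrow> (\<forall>a\<in>S. X a \<in> carrier_mat n n)"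

lemma Dw_car: "XS X \<Longrightarrow> set w \<subseteq> S \<Longrightarrow> Dw Pw n X w \<in> carrier_mat n n"
proof (induction w)
  case Nil thus ?case by simp
next
  case (Cons a w)
  thus ?case using Pw_car[of w] Pw_car[of "[a]"] by (auto simp: XS_def)
qed

lemma Dw_app:
  assumes X: "XS X" and v: "set v \<subseteq> S"
  shows "set u \<subseteq> S \<Longrightarrow> Dw Pw n X (u @ v) = Dw Pw n X u * Pw v + Pw u * Dw Pw n X v"
proof (induction u)
  case Nil
  have "Dw Pw n X v \<in> carrier_mat n n" using Dw_car[OF X v] .
  thus ?case using Pw_car[OF v] by (simp add: Pw_nil)
next
  case (Cons a u)
  have u: "set u \<subseteq> S" and a: "a \<in> S" using Cons.prems by auto
  have Xa: "X a \<in> carrier_mat n n" using X a by (auto simp: XS_def)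
  have Pa: "Pw [a] \<in> carrier_mat n n" using Pw_car a by auto
  have Pu: "Pw u \<in> carrier_mat n n" using Pw_car u by auto
  have Pv: "Pw v \<in> carrier_mat n n" using Pw_car v by auto
  have Du: "Dw Pw n X u \<in> carrier_mat n n" using Dw_car[OF X u] .
  have Dv: "Dw Pw n X v \<in> carrier_mat n n" using Dw_car[OF X v] .
  have Puv: "Pw (u @ v) = Pw u * Pw v" using Pw_app[OF u v] .
  have Pau: "Pw (a # u) = Pw [a] * Pw u" using Pw_app[of "[a]" u] a u by simp
  have "Dw Pw n X ((a # u) @ v) = X a * (Pw u * Pw v) + Pw [a] * (Dw Pw n X u * Pw v + Pw u * Dw Pw n X v)"
    using Cons.IH[OF u] Puv by simp
  also have "\<dots> = (X a * Pw u + Pw [a] * Dw Pw n X u) * Pw v + (Pw [a] * Pw u) * Dw Pw n X v"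
  proof -
    have 1: "X a * (Pw u * Pw v) = (X a * Pw u) * Pw v" using assoc_mult_mat[OF Xa Pu Pv] by simp
    have 2: "Pw [a] * (Dw Pw n X u * Pw v + Pw u * Dw Pw n X v) = (Pw [a] * Dw Pw n X u) * Pw v + (Pw [a] * Pw u) * Dw Pw n X v"
      using mult_add_distrib_mat[OF Pa mult_carrier_mat[OF Du Pv] mult_carrier_mat[OF Pu Dv]]
        assoc_mult_mat[OF Pa Du Pv] assoc_mult_mat[OF Pa Pu Dv] by simp
    have 3: "(X a * Pw u + Pw [a] * Dw Pw n X u) * Pw v = (X a * Pw u) * Pw v + (Pw [a] * Dw Pw n X u) * Pw v"
      using add_mult_distrib_mat[OF mult_carrier_mat[OF Xa Pu] mult_carrier_mat[OF Pa Du] Pv] .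
    have c1: "(X a * Pw u) * Pw v \<in> carrier_mat n n" using Xa Pu Pv by auto
    have c2: "(Pw [a] * Dw Pw n X u) * Pw v \<in> carrier_mat n n" using Pa Du Pv by auto
    have c3: "(Pw [a] * Pw u) * Dw Pw n X v \<in> carrier_mat n n" using Pa Pu Dv by auto
    show ?thesis unfolding 1 2 3 using assoc_add_mat[OF c1 c2 c3] by simp
  qed
  finally show ?case using Pau by simp
qed


lemma mat_add_swap:
  fixes a b c d :: "'b :: ab_group_add mat"
  assumes "a \<in> carrier_mat k m" "b \<in> carrier_mat k m" "c \<in> carrier_mat k m" "d \<in> carrier_mat k m"
  shows "(a + b) + (c + d) = (a + c) + (b + d)"
  by (rule eq_matI) (use assms in \<open>auto simp: algebra_simps\<close>)

lemma supp_fin: "f \<in> C \<Longrightarrow> finite {w. f w \<noteq> 0}"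
  by (simp add: fr_carrier)

lemma DD_add:
  assumes f: "f \<in> C" and g: "g \<in> C"
  shows "DD Pw n X (\<lambda>w. f w + g w) = DD Pw n X f + DD Pw n X g"
proof -
  define T where "T = {w. f w \<noteq> 0} \<union> {w. g w \<noteq> 0}"
  have T: "finite T" using supp_fin[OF f] supp_fin[OF g] by (simp add: T_def)
  have e1: "DD Pw n X (\<lambda>w. f w + g w) = mat n n (\<lambda>(i,j). \<Sum>w\<in>T. of_int (f w + g w) * (Dw Pw n X w $$ (i,j)))"
    by (rule DD_superset[OF T]) (auto simp: T_def)
  have e2: "DD Pw n X f = mat n n (\<lambda>(i,j). \<Sum>w\<in>T. of_int (f w) * (Dw Pw n X w $$ (i,j)))"
    by (rule DD_superset[OF T]) (auto simp: T_def)
  have e3: "DD Pw n X g = mat n n (\<lambda>(i,j). \<Sum>w\<in>T. of_int (g w) * (Dw Pw n X w $$ (i,j)))"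
    by (rule DD_superset[OF T]) (auto simp: T_def)
  show ?thesis unfolding e1 e2 e3
    by (rule eq_matI) (auto simp: sum.distrib distrib_right)
qed

lemma DD_dl:
  assumes X: "XS X" and w: "set w \<subseteq> S"
  shows "DD Pw n X (dl w) = Dw Pw n X w"
proof -
  have s: "{x. dl w x \<noteq> 0} = {w}" by (auto simp: dl_def)
  show ?thesis unfolding DD_def s
    by (rule eq_matI) (use Dw_car[OF X w] in \<open>auto simp: dl_def\<close>)
qed

lemma DD_leib_dl:
  assumes X: "XS X" and u: "set u \<subseteq> S" and g: "g \<in> C"
  shows "DD Pw n X (dl u \<otimes>\<^bsub>free_ring S\<^esub> g) = DD Pw n X (dl u) * pb g + pb (dl u) * DD Pw n X g"
proof -
  interpret R: ring "free_ring S" by (rule R_ring)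
  have du: "dl u \<in> C" using dl_carrier[OF u] .
  have Pu: "pb (dl u) \<in> carrier_mat n n" using pb_car[OF du] .
  have Du: "DD Pw n X (dl u) \<in> carrier_mat n n" by simp
  show ?thesis
  proof (rule addext[where Phi = "\<lambda>g. DD Pw n X (dl u \<otimes>\<^bsub>free_ring S\<^esub> g)"
        and Psi = "\<lambda>g. DD Pw n X (dl u) * pb g + pb (dl u) * DD Pw n X g", OF _ _ _ _ _ g])
    fix f g assume f: "f \<in> C" and g: "g \<in> C"
    have "dl u \<otimes>\<^bsub>free_ring S\<^esub> (\<lambda>w. f w + g w) = (\<lambda>w. (dl u \<otimes>\<^bsub>free_ring S\<^esub> f) w + (dl u \<otimes>\<^bsub>free_ring S\<^esub> g) w)"
      using R.r_distr[OF f g du] by (simp add: fr_add)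
    thus "DD Pw n X (dl u \<otimes>\<^bsub>free_ring S\<^esub> (\<lambda>w. f w + g w)) = DD Pw n X (dl u \<otimes>\<^bsub>free_ring S\<^esub> f) + DD Pw n X (dl u \<otimes>\<^bsub>free_ring S\<^esub> g)"
      using DD_add[of "dl u \<otimes>\<^bsub>free_ring S\<^esub> f" "dl u \<otimes>\<^bsub>free_ring S\<^esub> g"] du f g by simp
  next
    fix f g assume f: "f \<in> C" and g: "g \<in> C"
    have Pf: "pb f \<in> carrier_mat n n" and Pg: "pb g \<in> carrier_mat n n" using pb_car f g by auto
    have Df: "DD Pw n X f \<in> carrier_mat n n" and Dg: "DD Pw n X g \<in> carrier_mat n n" by auto
    show "DD Pw n X (dl u) * pb (\<lambda>w. f w + g w) + pb (dl u) * DD Pw n X (\<lambda>w. f w + g w) =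
          (DD Pw n X (dl u) * pb f + pb (dl u) * DD Pw n X f) + (DD Pw n X (dl u) * pb g + pb (dl u) * DD Pw n X g)"
      unfolding pb_add[OF f g] DD_add[OF f g] mult_add_distrib_mat[OF Du Pf Pg] mult_add_distrib_mat[OF Pu Df Dg]
      by (rule mat_add_swap[of _ n n]) (use Pf Pg Df Dg Pu Du in \<open>auto intro!: mult_carrier_mat DD_car\<close>)
  next
    fix f assume "f \<in> C"
    show "DD Pw n X (dl u \<otimes>\<^bsub>free_ring S\<^esub> f) \<in> carrier_mat n n" by simp
  next
    fix f assume f: "f \<in> C"
    show "DD Pw n X (dl u) * pb f + pb (dl u) * DD Pw n X f \<in> carrier_mat n n"
      using pb_car[OF f] Pu by auto
  next
    fix w assume w: "set w \<subseteq> S"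
    have "DD Pw n X (dl u \<otimes>\<^bsub>free_ring S\<^esub> dl w) = Dw Pw n X (u @ w)"
      unfolding dl_mult using DD_dl[OF X, of "u @ w"] u w by simp
    also have "\<dots> = Dw Pw n X u * Pw w + Pw u * Dw Pw n X w" using Dw_app[OF X w u] .
    finally show "DD Pw n X (dl u \<otimes>\<^bsub>free_ring S\<^esub> dl w) = DD Pw n X (dl u) * pb (dl w) + pb (dl u) * DD Pw n X (dl w)"
      using DD_dl[OF X] u w by (simp add: Pw_def)
  qed
qed


lemma DD_leib:
  assumes X: "XS X" and f: "f \<in> C" and g: "g \<in> C"
  shows "DD Pw n X (f \<otimes>\<^bsub>free_ring S\<^esub> g) = DD Pw n X f * pb g + pb f * DD Pw n X g"
proof -
  interpret R: ring "free_ring S" by (rule R_ring)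
  have Pg: "pb g \<in> carrier_mat n n" using pb_car[OF g] .
  have Dg: "DD Pw n X g \<in> carrier_mat n n" by simp
  show ?thesis
  proof (rule addext[where Phi = "\<lambda>f. DD Pw n X (f \<otimes>\<^bsub>free_ring S\<^esub> g)"
        and Psi = "\<lambda>f. DD Pw n X f * pb g + pb f * DD Pw n X g", OF _ _ _ _ _ f])
    fix f h assume f: "f \<in> C" and h: "h \<in> C"
    have "(\<lambda>w. f w + h w) \<otimes>\<^bsub>free_ring S\<^esub> g = (\<lambda>w. (f \<otimes>\<^bsub>free_ring S\<^esub> g) w + (h \<otimes>\<^bsub>free_ring S\<^esub> g) w)"
      using R.l_distr[OF f h g] by (simp add: fr_add)
    thus "DD Pw n X ((\<lambda>w. f w + h w) \<otimes>\<^bsub>free_ring S\<^esub> g) = DD Pw n X (f \<otimes>\<^bsub>free_ring S\<^esub> g) + DD Pw n X (h \<otimes>\<^bsub>free_ring S\<^esub> g)"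
      using DD_add[of "f \<otimes>\<^bsub>free_ring S\<^esub> g" "h \<otimes>\<^bsub>free_ring S\<^esub> g"] f h g by simp
  next
    fix f h assume f: "f \<in> C" and h: "h \<in> C"
    have Pf: "pb f \<in> carrier_mat n n" and Ph: "pb h \<in> carrier_mat n n" using pb_car f h by auto
    have Df: "DD Pw n X f \<in> carrier_mat n n" and Dh: "DD Pw n X h \<in> carrier_mat n n" by auto
    show "DD Pw n X (\<lambda>w. f w + h w) * pb g + pb (\<lambda>w. f w + h w) * DD Pw n X g =
          (DD Pw n X f * pb g + pb f * DD Pw n X g) + (DD Pw n X h * pb g + pb h * DD Pw n X g)"
      unfolding pb_add[OF f h] DD_add[OF f h] add_mult_distrib_mat[OF Df Dh Pg] add_mult_distrib_mat[OF Pf Ph Dg]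
      by (rule mat_add_swap[of _ n n]) (use Pf Ph Df Dh Pg Dg in \<open>auto intro!: mult_carrier_mat DD_car\<close>)
  next
    fix f assume "f \<in> C"
    show "DD Pw n X (f \<otimes>\<^bsub>free_ring S\<^esub> g) \<in> carrier_mat n n" by simp
  next
    fix f assume f: "f \<in> C"
    show "DD Pw n X f * pb g + pb f * DD Pw n X g \<in> carrier_mat n n"
      using pb_car[OF f] Pg by auto
  next
    fix w assume w: "set w \<subseteq> S"
    show "DD Pw n X (dl w \<otimes>\<^bsub>free_ring S\<^esub> g) = DD Pw n X (dl w) * pb g + pb (dl w) * DD Pw n X g"
      using DD_leib_dl[OF X w g] .
  qed
qed

lemma zero_C: "(\<lambda>w. 0::int) \<in> C" by (simp add: fr_carrier)

lemma pi_zero: "pi (\<lambda>w. 0) = 0\<^sub>m n n"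
proof -
  have "pi (\<lambda>w. 0) = pi (\<lambda>w. 0) + pi (\<lambda>w. 0)" using pi_add[OF zero_C zero_C] by simp
  thus ?thesis using mat_double_zero pi_car[OF zero_C] by blast
qed

lemma DD_zero: "DD Pw n X (\<lambda>w. 0) = 0\<^sub>m n n"
  unfolding DD_def by (rule eq_matI) auto

lemma pb_zero: "f \<in> C \<Longrightarrow> pi f = 0\<^sub>m n n \<Longrightarrow> pb f = 0\<^sub>m n n"
  unfolding pb_def by (rule eq_matI) auto

lemma DD_ker:
  assumes X: "XS X" and RelD: "\<And>r. r \<in> Rel \<Longrightarrow> DD Pw n X r = 0\<^sub>m n n"
  and f: "f \<in> C" and pf: "pi f = 0\<^sub>m n n"
  shows "DD Pw n X f = 0\<^sub>m n n"
proof -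
  interpret R: ring "free_ring S" by (rule R_ring)
  define I where "I = {f \<in> C. pi f = 0\<^sub>m n n \<and> DD Pw n X f = 0\<^sub>m n n}"
  have neg: "(\<lambda>w. x w + (\<ominus>\<^bsub>free_ring S\<^esub> x) w) = (\<lambda>w. 0)" if "x \<in> C" for x
    using R.r_neg[OF that] by (simp add: fr_add fr_zero)
  have "ideal I (free_ring S)"
  proof (rule idealI[OF R_ring])
    show "subgroup I (add_monoid (free_ring S))"
    proof
      show "I \<subseteq> carrier (add_monoid (free_ring S))" by (auto simp: I_def)
    next
      fix x y assume x: "x \<in> I" and y: "y \<in> I"
      then show "x \<otimes>\<^bsub>add_monoid (free_ring S)\<^esub> y \<in> I"
        using pi_add[of x y] DD_add[of x y] by (auto simp: I_def fr_add R.a_closed[simplified fr_add])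
    next
      show "\<one>\<^bsub>add_monoid (free_ring S)\<^esub> \<in> I"
        using zero_C pi_zero DD_zero by (auto simp: I_def fr_zero)
    next
      fix x assume x: "x \<in> I"
      have xc: "x \<in> C" using x by (auto simp: I_def)
      have ic: "\<ominus>\<^bsub>free_ring S\<^esub> x \<in> C" using R.a_inv_closed[OF xc] .
      have "pi x + pi (\<ominus>\<^bsub>free_ring S\<^esub> x) = 0\<^sub>m n n"
        using pi_add[OF xc ic] neg[OF xc] pi_zero by simp
      hence 1: "pi (\<ominus>\<^bsub>free_ring S\<^esub> x) = 0\<^sub>m n n" using x pi_car[OF ic] by (simp add: I_def)
      have "DD Pw n X x + DD Pw n X (\<ominus>\<^bsub>free_ring S\<^esub> x) = 0\<^sub>m n n"
        using DD_add[OF xc ic] neg[OF xc] DD_zero by metis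
      hence 2: "DD Pw n X (\<ominus>\<^bsub>free_ring S\<^esub> x) = 0\<^sub>m n n" using x by (simp add: I_def)
      have e: "inv\<^bsub>add_monoid (free_ring S)\<^esub> x = \<ominus>\<^bsub>free_ring S\<^esub> x" by (simp add: a_inv_def)
      show "inv\<^bsub>add_monoid (free_ring S)\<^esub> x \<in> I"
        unfolding e using 1 2 ic by (simp add: I_def)
    qed
  next
    fix a x assume a: "a \<in> I" and x: "x \<in> C"
    have ac: "a \<in> C" and pa: "pi a = 0\<^sub>m n n" and Da: "DD Pw n X a = 0\<^sub>m n n" using a by (auto simp: I_def)
    have pba: "pb a = 0\<^sub>m n n" using pb_zero[OF ac pa] .
    show "x \<otimes>\<^bsub>free_ring S\<^esub> a \<in> I"
      unfolding I_def using R.m_closed[OF x ac] pi_mult[OF x ac] DD_leib[OF X x ac] pa Da pba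
        pi_car[OF x] pb_car[OF x] by simp
    show "a \<otimes>\<^bsub>free_ring S\<^esub> x \<in> I"
      unfolding I_def using R.m_closed[OF ac x] pi_mult[OF ac x] DD_leib[OF X ac x] pa Da pba
        pi_car[OF x] pb_car[OF x] by simp
  qed
  moreover have "Rel \<subseteq> I" using Rel_car Rel_ker RelD by (auto simp: I_def)
  ultimately have "{f \<in> C. pi f = 0\<^sub>m n n} \<subseteq> I" by (rule ker_min)
  thus ?thesis using f pf by (auto simp: I_def)
qed

end


definition E :: "nat \<Rightarrow> nat \<Rightarrow> nat \<Rightarrow> int mat" where
  "E n p q = mat n n (\<lambda>(i,j). if i = p \<and> j = q then 1 else 0)"

abbreviation mb :: "int mat \<Rightarrow> bit mat" where "mb \<equiv> map_mat of_int"

lemma E_car[simp]: "E n p q \<in> carrier_mat n n" by (simp add: E_def)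
lemma E_dims[simp]: "dim_row (E n p q) = n" "dim_col (E n p q) = n" by (simp_all add: E_def)

lemma mult_E_right:
  fixes A :: "'b :: comm_ring_1 mat"
  assumes A: "A \<in> carrier_mat n n" and i: "i < n" and j: "j < n" and p: "p < n"
  shows "(A * map_mat of_int (E n p q)) $$ (i,j) = (if j = q then A $$ (i,p) else 0)"
proof -
  have "(A * map_mat of_int (E n p q)) $$ (i,j) = (\<Sum>r\<in>{0..<n}. A $$ (i,r) * of_int (if r = p \<and> j = q then 1 else 0))"
    using A i j by (simp add: scalar_prod_def E_def)
  also have "\<dots> = (\<Sum>r\<in>{0..<n}. if j = q then (if r = p then A $$ (i,r) else 0) else 0)"
    by (intro sum.cong) auto
  also have "\<dots> = (if j = q then A $$ (i,p) else 0)" using p by simp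
  finally show ?thesis .
qed

lemma mult_E_left:
  fixes A :: "'b :: comm_ring_1 mat"
  assumes A: "A \<in> carrier_mat n n" and i: "i < n" and j: "j < n" and q: "q < n"
  shows "(map_mat of_int (E n p q) * A) $$ (i,j) = (if i = p then A $$ (q,j) else 0)"
proof -
  have "(map_mat of_int (E n p q) * A) $$ (i,j) = (\<Sum>r\<in>{0..<n}. of_int (if i = p \<and> r = q then 1 else 0) * A $$ (r,j))"
    using A i j by (simp add: scalar_prod_def E_def)
  also have "\<dots> = (\<Sum>r\<in>{0..<n}. if i = p then (if r = q then A $$ (r,j) else 0) else 0)"
    by (intro sum.cong) auto
  also have "\<dots> = (if i = p then A $$ (q,j) else 0)" using q by simp
  finally show ?thesis .
qed

lemma map_of_int_int: "map_mat (of_int :: int \<Rightarrow> int) M = M"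
  by (rule eq_matI) auto

definition K :: "nat \<Rightarrow> int \<Rightarrow> int mat" where
  "K n c = mat n n (\<lambda>(i,j). if i = 0 \<and> j = 0 then c else 0)"

lemma K_car[simp]: "K n c \<in> carrier_mat n n" by (simp add: K_def)
lemma K_dims[simp]: "dim_row (K n c) = n" "dim_col (K n c) = n" by (simp_all add: K_def)

lemma K_add: "K n (a + b) = K n a + K n b"
  by (rule eq_matI) (auto simp: K_def)

lemma K_one: "K n 1 = E n 0 0"
  by (rule eq_matI) (auto simp: K_def E_def)

lemma E0p_m_Eq0:
  assumes m: "m \<in> carrier_mat n n" and p: "p < n" and q: "q < n"
  shows "E n 0 p * (m * E n q 0) = K n (m $$ (p,q))"
proof (rule eq_matI)
  fix i j assume ij: "i < dim_row (K n (m $$ (p,q)))" "j < dim_col (K n (m $$ (p,q)))"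
  hence i: "i < n" and j: "j < n" by (auto simp: K_def)
  have mc: "m * E n q 0 \<in> carrier_mat n n" using m by simp
  have "(E n 0 p * (m * E n q 0)) $$ (i,j) = (if i = 0 then (m * E n q 0) $$ (p,j) else 0)"
    using mult_E_left[OF mc i j p, of 0, unfolded map_of_int_int] .
  also have "\<dots> = (if i = 0 then (if j = 0 then m $$ (p,q) else 0) else 0)"
    using mult_E_right[OF m p j q, of 0, unfolded map_of_int_int] by simp
  finally show "(E n 0 p * (m * E n q 0)) $$ (i,j) = K n (m $$ (p,q)) $$ (i,j)"
    using i j by (simp add: K_def)
qed (auto simp: K_def E_def)

lemma E0r_Eq0:
  assumes r: "r < n" and q: "q < n"
  shows "E n 0 r * E n q 0 = K n (if r = q then 1 else 0)"
proof -
  have "E n 0 r * E n q 0 = E n 0 r * (1\<^sub>m n * E n q 0)" using left_mult_one_mat[OF E_car] by simp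
  also have "\<dots> = K n (1\<^sub>m n $$ (r,q))" by (rule E0p_m_Eq0[OF _ r q]) simp
  finally show ?thesis using r q by simp
qed



lemma grp_solve: "0 = a + (x + b) \<Longrightarrow> x = - a - (b :: 'b :: ab_group_add)"
  by (simp add: algebra_simps eq_neg_iff_add_eq_0)

context
  fixes d :: "int mat \<Rightarrow> bit mat" and n :: nat
  assumes npos: "0 < n"
  and dcar: "\<And>m. m \<in> carrier_mat n n \<Longrightarrow> d m \<in> carrier_mat n n"
  and dadd: "\<And>m m'. m \<in> carrier_mat n n \<Longrightarrow> m' \<in> carrier_mat n n \<Longrightarrow> d (m + m') = d m + d m'"
  and dmul: "\<And>m m'. m \<in> carrier_mat n n \<Longrightarrow> m' \<in> carrier_mat n n \<Longrightarrow> d (m * m') = d m * mb m' + mb m * d m'"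
begin

lemma d_dims[simp]: "m \<in> carrier_mat n n \<Longrightarrow> dim_row (d m) = n"  "m \<in> carrier_mat n n \<Longrightarrow> dim_col (d m) = n"
  using dcar by auto

lemma dE00: "d (E n 0 0) $$ (0,0) = 0"
proof -
  have "E n 0 0 * E n 0 0 = K n 1" using E0r_Eq0[OF npos npos] by simp
  hence ee: "E n 0 0 * E n 0 0 = E n 0 0" by (simp add: K_one)
  have "d (E n 0 0) = d (E n 0 0 * E n 0 0)" using ee by simp
  also have "\<dots> = d (E n 0 0) * mb (E n 0 0) + mb (E n 0 0) * d (E n 0 0)"
    by (rule dmul) simp_all
  finally have "d (E n 0 0) = d (E n 0 0) * mb (E n 0 0) + mb (E n 0 0) * d (E n 0 0)" .
  hence "d (E n 0 0) $$ (0,0) = (d (E n 0 0) * mb (E n 0 0) + mb (E n 0 0) * d (E n 0 0)) $$ (0,0)"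
    by (rule arg_cong)
  also have "\<dots> = (d (E n 0 0) * mb (E n 0 0)) $$ (0,0) + (mb (E n 0 0) * d (E n 0 0)) $$ (0,0)"
    using dcar[OF E_car] npos by simp
  also have "\<dots> = d (E n 0 0) $$ (0,0) + d (E n 0 0) $$ (0,0)"
    using mult_E_right[OF dcar[OF E_car] npos npos npos, of 0] mult_E_left[OF dcar[OF E_car] npos npos npos, of 0]
    by simp
  finally show ?thesis by simp
qed

lemma dK: "d (K n c) $$ (0,0) = 0"
proof (induction c rule: int_induct[where k = 0])
  case base
  have e: "K n 0 + K n 0 = K n 0" using K_add[of n 0 0] by simp
  have "d (K n 0) = d (K n 0 + K n 0)" by (simp only: e)
  also have "\<dots> = d (K n 0) + d (K n 0)" by (rule dadd) simp_all
  finally have "d (K n 0) = d (K n 0) + d (K n 0)" .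
  hence "d (K n 0) = 0\<^sub>m n n" using mat_double_zero dcar[OF K_car] by blast
  thus ?case using npos by simp
next
  case (step1 i)
  have "d (K n (i + 1)) = d (K n i) + d (K n 1)" using dadd[OF K_car K_car] K_add by simp
  hence "d (K n (i + 1)) $$ (0,0) = d (K n i) $$ (0,0) + d (K n 1) $$ (0,0)"
    using dcar[OF K_car] npos by simp
  thus ?case using step1 dE00 K_one by simp
next
  case (step2 i)
  have "d (K n i) = d (K n (i - 1)) + d (K n 1)" using dadd[OF K_car K_car] K_add[of n "i - 1" 1] by simp
  hence "d (K n i) $$ (0,0) = d (K n (i - 1)) $$ (0,0) + d (K n 1) $$ (0,0)"
    using dcar[OF K_car] npos by simp
  thus ?case using step2 dE00 K_one by simp
qed


lemma d_entry00_sum: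
  assumes "A \<in> carrier_mat n n" "B \<in> carrier_mat n n" "i < n" "j < n"
  shows "(A + B) $$ (i,j) = A $$ (i,j) + B $$ (i,j)"
  using assms by simp

lemma key_entry:
  assumes m: "m \<in> carrier_mat n n" and p: "p < n" and q: "q < n"
  shows "d m $$ (p,q) = - ((d (E n 0 p) * mb m) $$ (0,q)) - ((mb m * d (E n q 0)) $$ (p,0))"
proof -
  have mE: "m * E n q 0 \<in> carrier_mat n n" using m by simp
  have mbm: "mb m \<in> carrier_mat n n" using m by simp
  have dm: "d m \<in> carrier_mat n n" using dcar[OF m] .
  have d1: "d (E n 0 p) \<in> carrier_mat n n" and d2: "d (E n q 0) \<in> carrier_mat n n" using dcar by auto
  have Z: "d (m * E n q 0) = d m * mb (E n q 0) + mb m * d (E n q 0)" using dmul[OF m E_car] .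
  have "d (E n 0 p * (m * E n q 0)) = d (E n 0 p) * mb (m * E n q 0) + mb (E n 0 p) * d (m * E n q 0)"
    using dmul[OF E_car mE] .
  hence "d (K n (m $$ (p,q))) $$ (0,0) = (d (E n 0 p) * mb (m * E n q 0) + mb (E n 0 p) * d (m * E n q 0)) $$ (0,0)"
    unfolding E0p_m_Eq0[OF m p q] by (rule arg_cong)
  also have "\<dots> = (d (E n 0 p) * mb (m * E n q 0)) $$ (0,0) + (mb (E n 0 p) * d (m * E n q 0)) $$ (0,0)"
    using npos mE dcar[OF mE] by simp
  also have "(d (E n 0 p) * mb (m * E n q 0)) $$ (0,0) = ((d (E n 0 p) * mb m) * mb (E n q 0)) $$ (0,0)"
  proof -
    have hm: "mb (m * E n q 0) = mb m * mb (E n q 0)" by (rule of_int_hom.mat_hom_mult[OF m E_car])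
    have "d (E n 0 p) * (mb m * mb (E n q 0)) = (d (E n 0 p) * mb m) * mb (E n q 0)"
      by (rule assoc_mult_mat[symmetric]) (use d1 mbm in auto)
    thus ?thesis unfolding hm by simp
  qed
  also have "\<dots> = (d (E n 0 p) * mb m) $$ (0,q)"
    using mult_E_right[OF _ npos npos q, of "d (E n 0 p) * mb m" 0] d1 mbm by simp
  also have "(mb (E n 0 p) * d (m * E n q 0)) $$ (0,0) = d (m * E n q 0) $$ (p,0)"
    using mult_E_left[OF dcar[OF mE] npos npos p, of 0] by simp
  also have "\<dots> = (d m * mb (E n q 0)) $$ (p,0) + (mb m * d (E n q 0)) $$ (p,0)"
    unfolding Z using p npos dm mbm d2 by simp
  also have "(d m * mb (E n q 0)) $$ (p,0) = d m $$ (p,q)"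
    using mult_E_right[OF dm p npos q, of 0] by simp
  finally have "0 = (d (E n 0 p) * mb m) $$ (0,q) + (d m $$ (p,q) + (mb m * d (E n q 0)) $$ (p,0))"
    using dK by simp
  thus ?thesis by (rule grp_solve)
qed

lemma swap_entry:
  assumes r: "r < n" and q: "q < n"
  shows "d (E n q 0) $$ (r,0) = - (d (E n 0 r) $$ (0,q))"
proof -
  have d1: "d (E n 0 r) \<in> carrier_mat n n" and d2: "d (E n q 0) \<in> carrier_mat n n" using dcar by auto
  have "d (E n 0 r * E n q 0) = d (E n 0 r) * mb (E n q 0) + mb (E n 0 r) * d (E n q 0)"
    using dmul[OF E_car E_car] .
  hence "d (K n (if r = q then 1 else 0)) $$ (0,0) = (d (E n 0 r) * mb (E n q 0) + mb (E n 0 r) * d (E n q 0)) $$ (0,0)"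
    unfolding E0r_Eq0[OF r q] by (rule arg_cong)
  also have "\<dots> = (d (E n 0 r) * mb (E n q 0)) $$ (0,0) + (mb (E n 0 r) * d (E n q 0)) $$ (0,0)"
    using npos d1 d2 by simp
  also have "\<dots> = d (E n 0 r) $$ (0,q) + d (E n q 0) $$ (r,0)"
    using mult_E_right[OF d1 npos npos q, of 0] mult_E_left[OF d2 npos npos r, of 0] by simp
  finally have "0 = d (E n 0 r) $$ (0,q) + d (E n q 0) $$ (r,0)" using dK by simp
  thus ?thesis by (metis add.commute eq_neg_iff_add_eq_0)
qed

definition Yd :: "bit mat" where
  "Yd = mat n n (\<lambda>(p,q). d (E n 0 p) $$ (0,q))"

lemma Yd_car: "Yd \<in> carrier_mat n n" by (simp add: Yd_def)

lemma Yd00: "Yd $$ (0,0) = 0"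
  using dE00 npos by (simp add: Yd_def)

lemma inner:
  assumes m: "m \<in> carrier_mat n n"
  shows "d m = mb m * Yd - Yd * mb m"
proof (rule eq_matI)
  fix p q assume "p < dim_row (mb m * Yd - Yd * mb m)" "q < dim_col (mb m * Yd - Yd * mb m)"
  hence p: "p < n" and q: "q < n" using m by (auto simp: Yd_def)
  have d1: "d (E n 0 p) \<in> carrier_mat n n" and d2: "d (E n q 0) \<in> carrier_mat n n" using dcar by auto
  have "d m $$ (p,q) = - ((d (E n 0 p) * mb m) $$ (0,q)) - ((mb m * d (E n q 0)) $$ (p,0))"
    using key_entry[OF m p q] .
  also have "(d (E n 0 p) * mb m) $$ (0,q) = (\<Sum>r\<in>{0..<n}. d (E n 0 p) $$ (0,r) * of_int (m $$ (r,q)))"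
    using d1 m npos q by (simp add: scalar_prod_def)
  also have "\<dots> = (\<Sum>r\<in>{0..<n}. Yd $$ (p,r) * mb m $$ (r,q))"
    using m p q by (intro sum.cong) (auto simp: Yd_def)
  also have "\<dots> = (Yd * mb m) $$ (p,q)"
    using m p q by (simp add: scalar_prod_def Yd_def)
  also have "(mb m * d (E n q 0)) $$ (p,0) = (\<Sum>r\<in>{0..<n}. of_int (m $$ (p,r)) * d (E n q 0) $$ (r,0))"
    using d2 m npos p by (simp add: scalar_prod_def)
  also have "\<dots> = - (\<Sum>r\<in>{0..<n}. mb m $$ (p,r) * Yd $$ (r,q))"
    using m p q swap_entry by (auto simp: Yd_def sum_negf[symmetric] intro!: sum.cong)
  also have "(\<Sum>r\<in>{0..<n}. mb m $$ (p,r) * Yd $$ (r,q)) = (mb m * Yd) $$ (p,q)"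
    using m p q by (simp add: scalar_prod_def Yd_def)
  finally show "d m $$ (p,q) = (mb m * Yd - Yd * mb m) $$ (p,q)"
    using m p q Yd_car by simp
qed (use m in \<open>auto simp: Yd_def\<close>)

end


lemma Dw_cong: "(\<And>a. a \<in> set w \<Longrightarrow> X a = X' a) \<Longrightarrow> Dw P n X w = Dw P n X' w"
  by (induction w) auto

lemma DD_cong:
  assumes "\<And>w a. f w \<noteq> 0 \<Longrightarrow> a \<in> set w \<Longrightarrow> X a = X' a"
  shows "DD P n X f = DD P n X' f"
proof -
  have "Dw P n X w = Dw P n X' w" if "f w \<noteq> 0" for w
    by (rule Dw_cong) (use assms that in blast)
  thus ?thesis unfolding DD_def by (intro cong[of "mat n n", OF refl] ext) (auto intro!: sum.cong)
qed

lemma mat_self_add_zero: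
  fixes A B :: "'b :: ab_group_add mat"
  assumes "A \<in> carrier_mat n m" "B \<in> carrier_mat n m" "A + B = B"
  shows "A = 0\<^sub>m n m"
proof (rule eq_matI)
  fix i j assume ij: "i < dim_row (0\<^sub>m n m :: 'b mat)" "j < dim_col (0\<^sub>m n m :: 'b mat)"
  have i: "i < n" "j < m" using ij by auto
  have "(A + B) $$ (i,j) = B $$ (i,j)" using assms(3) by simp
  thus "A $$ (i,j) = 0\<^sub>m n m $$ (i,j)" using assms(1,2) i by simp
qed (use assms in auto)

context mp
begin

lemma Dw_add:
  assumes X: "XS X" and X': "XS X'"
  shows "set w \<subseteq> S \<Longrightarrow> Dw Pw n (\<lambda>a. X a + X' a) w = Dw Pw n X w + Dw Pw n X' w"
proof (induction w)
  case Nil thus ?case by simp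
next
  case (Cons a w)
  have w: "set w \<subseteq> S" and a: "a \<in> S" using Cons.prems by auto
  have Xa: "X a \<in> carrier_mat n n" "X' a \<in> carrier_mat n n" using X X' a by (auto simp: XS_def)
  have Pa: "Pw [a] \<in> carrier_mat n n" using Pw_car a by auto
  have Pu: "Pw w \<in> carrier_mat n n" using Pw_car w by auto
  have D: "Dw Pw n X w \<in> carrier_mat n n" "Dw Pw n X' w \<in> carrier_mat n n" using Dw_car X X' w by auto
  have "Dw Pw n (\<lambda>a. X a + X' a) (a # w) = (X a + X' a) * Pw w + Pw [a] * (Dw Pw n X w + Dw Pw n X' w)"
    using Cons.IH[OF w] by simp
  also have "\<dots> = (X a * Pw w + X' a * Pw w) + (Pw [a] * Dw Pw n X w + Pw [a] * Dw Pw n X' w)"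
    using add_mult_distrib_mat[OF Xa Pu] mult_add_distrib_mat[OF Pa D] by simp
  also have "\<dots> = (X a * Pw w + Pw [a] * Dw Pw n X w) + (X' a * Pw w + Pw [a] * Dw Pw n X' w)"
    by (rule mat_add_swap[of _ n n]) (use Xa Pu Pa D in auto)
  finally show ?case by simp
qed

lemma DD_addX:
  assumes X: "XS X" and X': "XS X'" and f: "f \<in> C"
  shows "DD Pw n (\<lambda>a. X a + X' a) f = DD Pw n X f + DD Pw n X' f"
proof (rule eq_matI)
  fix i j assume "i < dim_row (DD Pw n X f + DD Pw n X' f)" "j < dim_col (DD Pw n X f + DD Pw n X' f)"
  hence ij: "i < n" "j < n" by auto
  have sw: "set w \<subseteq> S" if "w \<in> {w. f w \<noteq> 0}" for w using f that by (auto simp: fr_carrier)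
  have "DD Pw n (\<lambda>a. X a + X' a) f $$ (i,j) = (\<Sum>w\<in>{w. f w \<noteq> 0}. of_int (f w) * (Dw Pw n (\<lambda>a. X a + X' a) w $$ (i,j)))"
    using ij by (simp add: DD_def)
  also have "\<dots> = (\<Sum>w\<in>{w. f w \<noteq> 0}. of_int (f w) * (Dw Pw n X w $$ (i,j)) + of_int (f w) * (Dw Pw n X' w $$ (i,j)))"
  proof (rule sum.cong[OF refl])
    fix w assume w: "w \<in> {w. f w \<noteq> 0}"
    have "Dw Pw n (\<lambda>a. X a + X' a) w $$ (i,j) = Dw Pw n X w $$ (i,j) + Dw Pw n X' w $$ (i,j)"
      using Dw_add[OF X X' sw[OF w]] Dw_car[OF X' sw[OF w]] ij by simp
    thus "of_int (f w) * (Dw Pw n (\<lambda>a. X a + X' a) w $$ (i,j)) = of_int (f w) * (Dw Pw n X w $$ (i,j)) + of_int (f w) * (Dw Pw n X' w $$ (i,j))"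
      by (simp add: distrib_left)
  qed
  also have "\<dots> = DD Pw n X f $$ (i,j) + DD Pw n X' f $$ (i,j)"
    using ij by (simp add: DD_def sum.distrib)
  finally show "DD Pw n (\<lambda>a. X a + X' a) f $$ (i,j) = (DD Pw n X f + DD Pw n X' f) $$ (i,j)"
    using ij by simp
qed auto

definition good :: "('a \<Rightarrow> bit mat) \<Rightarrow> bool" where
  "good X \<longleftrightarrow> XS X \<and> (\<forall>r\<in>Rel. DD Pw n X r = 0\<^sub>m n n)"

definition dd :: "('a \<Rightarrow> bit mat) \<Rightarrow> int mat \<Rightarrow> bit mat" where
  "dd X m = DD Pw n X (SOME f. f \<in> C \<and> pi f = m)"

lemma dd_eq:
  assumes X: "good X" and f: "f \<in> C"
  shows "dd X (pi f) = DD Pw n X f"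
proof -
  interpret R: ring "free_ring S" by (rule R_ring)
  have ex: "\<exists>g. g \<in> C \<and> pi g = pi f" using f by blast
  define g where "g = (SOME g. g \<in> C \<and> pi g = pi f)"
  have gg: "g \<in> C \<and> pi g = pi f" using someI_ex[OF ex] unfolding g_def .
  hence g: "g \<in> C" "pi g = pi f" by auto
  have gdef: "g = (SOME g. g \<in> C \<and> pi g = pi f)" by (simp add: g_def)
  define h where "h = f \<oplus>\<^bsub>free_ring S\<^esub> (\<ominus>\<^bsub>free_ring S\<^esub> g)"
  have hc: "h \<in> C" unfolding h_def using f g by simp
  have gh: "g \<oplus>\<^bsub>free_ring S\<^esub> h = f"
    unfolding h_def using f g R.a_lcomm[of g f "\<ominus>\<^bsub>free_ring S\<^esub> g"] R.r_neg[of g] by simp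
  have "pi f = pi g + pi h" using pi_add'[OF g(1) hc] gh by simp
  hence "pi h + pi g = pi g" using g(2) pi_car[OF hc] pi_car[OF g(1)] by (simp add: comm_add_mat)
  hence ph: "pi h = 0\<^sub>m n n" using mat_self_add_zero pi_car[OF hc] pi_car[OF g(1)] by blast
  have Dh: "DD Pw n X h = 0\<^sub>m n n" using DD_ker[OF _ _ hc ph] X by (auto simp: good_def)
  have "DD Pw n X f = DD Pw n X g + DD Pw n X h" using DD_add[OF g(1) hc] gh by (simp add: fr_add)
  hence "DD Pw n X f = DD Pw n X g" using Dh by simp
  thus ?thesis unfolding dd_def gdef[symmetric] by simp
qed

lemma dd_props:
  assumes X: "good X"
  shows "\<And>m. m \<in> carrier_mat n n \<Longrightarrow> dd X m \<in> carrier_mat n n"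
    and "\<And>m m'. m \<in> carrier_mat n n \<Longrightarrow> m' \<in> carrier_mat n n \<Longrightarrow> dd X (m + m') = dd X m + dd X m'"
    and "\<And>m m'. m \<in> carrier_mat n n \<Longrightarrow> m' \<in> carrier_mat n n \<Longrightarrow> dd X (m * m') = dd X m * mb m' + mb m * dd X m'"
proof -
  interpret R: ring "free_ring S" by (rule R_ring)
  have XS: "XS X" using X by (simp add: good_def)
  show "\<And>m. m \<in> carrier_mat n n \<Longrightarrow> dd X m \<in> carrier_mat n n" by (simp add: dd_def)
  fix m m' :: "int mat" assume m: "m \<in> carrier_mat n n" and m': "m' \<in> carrier_mat n n"
  obtain f where f: "f \<in> C" "pi f = m" using pi_surj[OF m] by blast
  obtain f' where f': "f' \<in> C" "pi f' = m'" using pi_surj[OF m'] by blast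
  show "dd X (m + m') = dd X m + dd X m'"
    using dd_eq[OF X, of "f \<oplus>\<^bsub>free_ring S\<^esub> f'"] pi_add'[OF f(1) f'(1)] DD_add[OF f(1) f'(1)]
      dd_eq[OF X f(1)] dd_eq[OF X f'(1)] f f' R.a_closed[OF f(1) f'(1)] by (simp add: fr_add)
  show "dd X (m * m') = dd X m * mb m' + mb m * dd X m'"
    using dd_eq[OF X, of "f \<otimes>\<^bsub>free_ring S\<^esub> f'"] pi_mult[OF f(1) f'(1)] DD_leib[OF XS f(1) f'(1)]
      dd_eq[OF X f(1)] dd_eq[OF X f'(1)] f f' by (simp add: pb_def)
qed

definition YY :: "('a \<Rightarrow> bit mat) \<Rightarrow> bit mat" where
  "YY X = Yd (dd X) n"

lemma good_X_eq:
  assumes X: "good X" and s: "s \<in> S"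
  shows "X s = mb (pi (dl [s])) * YY X - YY X * mb (pi (dl [s]))"
proof -
  have XS: "XS X" using X by (simp add: good_def)
  have Xs: "X s \<in> carrier_mat n n" using XS s by (simp add: XS_def)
  have ss: "set [s] \<subseteq> S" using s by simp
  have "X s = Dw Pw n X [s]" using Xs right_mult_zero_mat[of "Pw [s]" n n n] Pw_car[OF ss] by (simp add: Pw_nil)
  also have "\<dots> = DD Pw n X (dl [s])" using DD_dl[OF XS ss] by simp
  also have "\<dots> = dd X (pi (dl [s]))" using dd_eq[OF X dl_carrier[OF ss]] by simp
  also have "\<dots> = mb (pi (dl [s])) * YY X - YY X * mb (pi (dl [s]))"
    unfolding YY_def by (rule inner[OF n_pos dd_props[OF X]]) (use pi_car dl_carrier[OF ss] in auto)
  finally show ?thesis .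
qed

lemma YY_props: assumes X: "good X" shows "YY X \<in> carrier_mat n n \<and> YY X $$ (0,0) = 0"
  unfolding YY_def using Yd_car[OF n_pos dd_props[OF X]] Yd00[OF n_pos dd_props[OF X]] by blast

end


lemma finite_bit: "finite (UNIV :: bit set)"
proof -
  have "UNIV = {0, 1 :: bit}" by (auto intro: bit.exhaust)
  thus ?thesis by (metis finite.emptyI finite.insertI)
qed

lemma finite_carrier_bit: "finite (carrier_mat n n :: bit mat set)"
proof -
  have "carrier_mat n n \<subseteq> (\<lambda>f. mat n n f) ` (PiE ({0..<n} \<times> {0..<n}) (\<lambda>_. UNIV :: bit set))"
  proof
    fix M :: "bit mat" assume M: "M \<in> carrier_mat n n"
    have "M = mat n n (restrict (\<lambda>ij. M $$ ij) ({0..<n} \<times> {0..<n}))"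
      by (rule eq_matI) (use M in auto)
    moreover have "restrict (\<lambda>ij. M $$ ij) ({0..<n} \<times> {0..<n}) \<in> PiE ({0..<n} \<times> {0..<n}) (\<lambda>_. UNIV)"
      by simp
    ultimately show "M \<in> (\<lambda>f. mat n n f) ` (PiE ({0..<n} \<times> {0..<n}) (\<lambda>_. UNIV :: bit set))" by blast
  qed
  moreover have "finite (PiE ({0..<n} \<times> {0..<n}) (\<lambda>_. UNIV :: bit set))"
    by (intro finite_PiE) (auto simp: finite_bit)
  ultimately show ?thesis by (meson finite_imageI finite_subset)
qed

lemma mat_sub_add:
  fixes A B :: "'b :: ab_group_add mat"
  assumes "A \<in> carrier_mat n m" "B \<in> carrier_mat n m"
  shows "(A - B) + B = A"
  by (rule eq_matI) (use assms in auto)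

lemma mat_sub_cancel:
  fixes A B C :: "'b :: ab_group_add mat"
  assumes "A \<in> carrier_mat n m" "B \<in> carrier_mat n m" "C \<in> carrier_mat n m" "A - C = B - C"
  shows "A = B"
  using mat_sub_add[OF assms(1,3)] mat_sub_add[OF assms(2,3)] assms(4) by metis

context mp
begin

lemma counting:
  assumes finS: "finite S" and finR: "finite Rel"
  shows "card S \<le> card Rel"
proof -
  let ?Cn = "carrier_mat n n :: bit mat set"
  define Dom where "Dom = PiE S (\<lambda>_. ?Cn)"
  define Kset where "Kset = {X \<in> Dom. \<forall>r\<in>Rel. DD Pw n X r = 0\<^sub>m n n}"
  define Phi where "Phi = (\<lambda>X. restrict (\<lambda>r. DD Pw n X r) Rel)"
  define Y0 where "Y0 = {Y \<in> ?Cn. Y $$ (0,0) = 0}"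
  have finC: "finite ?Cn" by (rule finite_carrier_bit)
  have finDom: "finite Dom" unfolding Dom_def using finS finC by (intro finite_PiE) auto
  have XS_Dom: "XS X" if "X \<in> Dom" for X using that by (auto simp: Dom_def XS_def)
  have good_K: "good X" if "X \<in> Kset" for X using that XS_Dom by (auto simp: Kset_def good_def)
  have cardK: "card Kset \<le> card Y0"
  proof (rule card_inj_on_le[where f = YY])
    show "inj_on YY Kset"
    proof
      fix X X' assume X: "X \<in> Kset" and X': "X' \<in> Kset" and eq: "YY X = YY X'"
      have XD: "X \<in> Dom" "X' \<in> Dom" using X X' by (auto simp: Kset_def)
      show "X = X'"
      proof (rule PiE_ext[OF XD(1)[unfolded Dom_def] XD(2)[unfolded Dom_def]])
        fix s assume "s \<in> S"
        thus "X s = X' s" using good_X_eq[OF good_K[OF X]] good_X_eq[OF good_K[OF X']] eq by simp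
      qed
    qed
    show "YY ` Kset \<subseteq> Y0" using YY_props good_K by (auto simp: Y0_def)
    show "finite Y0" using finC by (simp add: Y0_def)
  qed
  have Y0_less: "card Y0 < card ?Cn"
  proof (rule psubset_card_mono[OF finC])
    have "1\<^sub>m n \<in> ?Cn" by simp
    moreover have "1\<^sub>m n \<notin> Y0" using n_pos by (simp add: Y0_def)
    moreover have "Y0 \<subseteq> ?Cn" unfolding Y0_def by blast
    ultimately show "Y0 \<subset> ?Cn" by blast
  qed
  have Y0_pos: "0 < card Y0"
  proof -
    have "0\<^sub>m n n \<in> Y0" using n_pos by (simp add: Y0_def)
    moreover have "finite Y0" using finC unfolding Y0_def by simp
    ultimately show ?thesis using card_gt_0_iff by blast
  qed
  have fib: "card {X \<in> Dom. Phi X = y} \<le> card Kset" if y: "y \<in> Phi ` Dom" for y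
  proof -
    obtain X0 where X0: "X0 \<in> Dom" and yX0: "y = Phi X0" using y by blast
    define tau where "tau = (\<lambda>X. restrict (\<lambda>a. X a - X0 a) S)"
    show ?thesis
    proof (rule card_inj_on_le[where f = tau])
      show "inj_on tau {X \<in> Dom. Phi X = y}"
      proof
        fix X X' assume X: "X \<in> {X \<in> Dom. Phi X = y}" and X': "X' \<in> {X \<in> Dom. Phi X = y}"
          and eq: "tau X = tau X'"
        have XD: "X \<in> Dom" "X' \<in> Dom" using X X' by auto
        show "X = X'"
        proof (rule PiE_ext[OF XD(1)[unfolded Dom_def] XD(2)[unfolded Dom_def]])
          fix s assume s: "s \<in> S"
          have "X s - X0 s = X' s - X0 s" using fun_cong[OF eq, of s] s by (simp add: tau_def)
          moreover have "X s \<in> ?Cn" "X' s \<in> ?Cn" "X0 s \<in> ?Cn" using XD X0 s by (auto simp: Dom_def)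
          ultimately show "X s = X' s" using mat_sub_cancel by blast
        qed
      qed
      show "tau ` {X \<in> Dom. Phi X = y} \<subseteq> Kset"
      proof
        fix Z assume "Z \<in> tau ` {X \<in> Dom. Phi X = y}"
        then obtain X where X: "X \<in> Dom" "Phi X = Phi X0" and Z: "Z = tau X" using yX0 by auto
        have ZD: "Z \<in> Dom" using X(1) X0 by (auto simp: Z tau_def Dom_def intro!: minus_carrier_mat)
        have "DD Pw n Z r = 0\<^sub>m n n" if r: "r \<in> Rel" for r
        proof -
          have rc: "r \<in> C" using Rel_car r by auto
          have "DD Pw n Z r + DD Pw n X0 r = DD Pw n (\<lambda>a. Z a + X0 a) r"
            using DD_addX[OF XS_Dom[OF ZD] XS_Dom[OF X0] rc] by simp
          also have "\<dots> = DD Pw n X r"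
          proof (rule DD_cong)
            fix w a assume "r w \<noteq> 0" "a \<in> set w"
            hence a: "a \<in> S" using rc by (auto simp: fr_carrier)
            have "X a \<in> ?Cn" "X0 a \<in> ?Cn" using a X(1) X0 by (auto simp: Dom_def)
            moreover have "Z a = X a - X0 a" using a by (simp add: Z tau_def)
            ultimately show "Z a + X0 a = X a" using mat_sub_add by metis
          qed
          also have "\<dots> = DD Pw n X0 r" using fun_cong[OF X(2), of r] r by (simp add: Phi_def)
          finally show ?thesis using mat_self_add_zero[of "DD Pw n Z r" n n "DD Pw n X0 r"] by simp
        qed
        thus "Z \<in> Kset" using ZD by (simp add: Kset_def)
      qed
      show "finite Kset" using finDom by (simp add: Kset_def)
    qed
  qed
  have A0: "card Dom \<le> (\<Sum>y\<in>Phi ` Dom. card {X \<in> Dom. Phi X = y})"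
  proof -
    have "card (\<Union>y\<in>Phi ` Dom. {X \<in> Dom. Phi X = y}) \<le> (\<Sum>y\<in>Phi ` Dom. card {X \<in> Dom. Phi X = y})"
      by (rule card_UN_le) (rule finite_imageI[OF finDom])
    moreover have "(\<Union>y\<in>Phi ` Dom. {X \<in> Dom. Phi X = y}) = Dom" by blast
    ultimately show ?thesis by simp
  qed
  have A1: "(\<Sum>y\<in>Phi ` Dom. card {X \<in> Dom. Phi X = y}) \<le> (\<Sum>y\<in>Phi ` Dom. card Kset)"
    by (rule sum_mono) (rule fib)
  have A: "card Dom \<le> card (Phi ` Dom) * card Kset" using A0 A1 by simp
  have B0: "card (Phi ` Dom) \<le> card (PiE Rel (\<lambda>_. ?Cn))"
  proof (rule card_mono)
    show "finite (PiE Rel (\<lambda>_. ?Cn))" using finR finC by (intro finite_PiE) auto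
    show "Phi ` Dom \<subseteq> PiE Rel (\<lambda>_. ?Cn)" unfolding Phi_def by auto
  qed
  have B1: "card (PiE Rel (\<lambda>_. ?Cn)) = card ?Cn ^ card Rel" using finR by (simp add: card_PiE)
  have C1: "card (Phi ` Dom) * card Kset \<le> card ?Cn ^ card Rel * card Y0"
    by (rule mult_le_mono) (use B0 B1 cardK in simp_all)
  have C: "card Dom \<le> card ?Cn ^ card Rel * card Y0" using A C1 by (rule le_trans)
  have cd: "card Dom = card ?Cn ^ card S" using finS by (simp add: Dom_def card_PiE)
  have gt1: "1 < card ?Cn" using Y0_less Y0_pos by linarith
  hence pos: "0 < card ?Cn ^ card Rel" by simp
  have lt: "card ?Cn ^ card Rel * card Y0 < card ?Cn ^ card Rel * card ?Cn"
    using pos Y0_less by (rule mult_less_mono2[rotated])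
  have "card ?Cn ^ card S < card ?Cn ^ card Rel * card ?Cn" using C cd lt by linarith
  also have "\<dots> = card ?Cn ^ (card Rel + 1)" by (simp add: mult.commute)
  finally have "card ?Cn ^ card S < card ?Cn ^ (card Rel + 1)" .
  hence "card S < card Rel + 1" using gt1 power_less_imp_less_exp by blast
  thus ?thesis by simp
qed

end


theorem theorem3:
  fixes n :: nat and S :: "'a set" and Rel :: "('a list \<Rightarrow> int) set"
  assumes "n \<ge> 2"
    and "finite S"
    and "Rel \<subseteq> carrier (free_ring S)"
    and "(free_ring S) Quot (genideal (free_ring S) Rel) \<simeq> Mat_Z n"
  shows "infinite Rel \<or> card S \<le> card Rel"
proof (cases "finite Rel")
  case False thus ?thesis by simp
next
  case finR: True
  define J where "J = genideal (free_ring S) Rel"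
  obtain h where h: "h \<in> ring_iso (free_ring S Quot J) (Mat_Z n)"
    using assms(4) unfolding is_ring_iso_def J_def by blast
  have hom: "h \<in> Ring.ring_hom (free_ring S Quot J) (Mat_Z n)" using h by (simp add: ring_iso_def)
  have bij: "bij_betw h (carrier (free_ring S Quot J)) (carrier_mat n n)"
    using h by (simp add: ring_iso_def Mat_Z_def ring_mat_simps)
  have npos: "0 < n" using assms(1) by simp
  have zo: "(0\<^sub>m n n :: int mat) \<noteq> 1\<^sub>m n"
  proof
    assume "(0\<^sub>m n n :: int mat) = 1\<^sub>m n"
    hence "(0\<^sub>m n n :: int mat) $$ (0,0) = 1\<^sub>m n $$ (0,0)" by simp
    thus False using npos by simp
  qed
  show ?thesis
  proof (cases "ring (free_ring S)")
    case False
    have e: "{I. ideal I (free_ring S) \<and> Rel \<subseteq> I} = {}"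
      using False by (auto dest: ideal.axioms(2))
    have JU: "J = UNIV" unfolding J_def genideal_def e by simp
    have "carrier (free_ring S Quot J) \<subseteq> {UNIV}"
    proof
      fix c assume "c \<in> carrier (free_ring S Quot J)"
      then obtain a where a: "c = J +>\<^bsub>free_ring S\<^esub> a"
        unfolding FactRing_def A_RCOSETS_def' by auto
      have "J +>\<^bsub>free_ring S\<^esub> a = UNIV"
      proof -
        have "x \<in> (\<Union>g\<in>UNIV. {g \<oplus>\<^bsub>free_ring S\<^esub> a})" for x
        proof -
          have "x = (\<lambda>w. x w - a w) \<oplus>\<^bsub>free_ring S\<^esub> a" by (simp add: fr_add)
          thus ?thesis by blast
        qed
        thus ?thesis unfolding JU a_r_coset_def' by blast
      qed
      thus "c \<in> {UNIV}" using a by simp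
    qed
    moreover have "h ` carrier (free_ring S Quot J) = carrier_mat n n" using bij_betw_imp_surj_on[OF bij] .
    ultimately have "carrier_mat n n \<subseteq> h ` {UNIV}" by blast
    moreover have "(0\<^sub>m n n :: int mat) \<in> carrier_mat n n" "(1\<^sub>m n :: int mat) \<in> carrier_mat n n" by auto
    ultimately have "0\<^sub>m n n \<in> h ` {UNIV}" "1\<^sub>m n \<in> h ` {UNIV}" by blast+
    hence "(0\<^sub>m n n :: int mat) = 1\<^sub>m n" by simp
    thus ?thesis using zo by simp
  next
    case True
    interpret R: ring "free_ring S" by fact
    have idJ: "ideal J (free_ring S)" using R.genideal_ideal[OF assms(3)] by (simp add: J_def)
    interpret J: ideal J "free_ring S" by fact
    define pi where "pi = (\<lambda>f. h (J +>\<^bsub>free_ring S\<^esub> f))"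
    have rM: "ring (Mat_Z n)" unfolding Mat_Z_def by (rule ring_mat)
    have pihom: "pi \<in> Ring.ring_hom (free_ring S) (Mat_Z n)"
      using ring_hom_trans[OF J.rcos_ring_hom hom] by (simp add: pi_def comp_def)
    have hJ: "h J = 0\<^sub>m n n"
      using ring_hom_zero[OF hom J.quotient_is_ring rM] by (simp add: FactRing_def Mat_Z_def ring_mat_simps)
    have Jcar: "J \<in> carrier (free_ring S Quot J)"
    proof -
      have "J +>\<^bsub>free_ring S\<^esub> \<zero>\<^bsub>free_ring S\<^esub> = J" using R.a_rcos_zero[OF idJ] J.additive_subgroup_axioms
        by (simp add: additive_subgroup.zero_closed)
      thus ?thesis unfolding FactRing_def A_RCOSETS_def' by force
    qed
    have mp: "mp S n pi Rel"
    proof (rule mp.intro)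
      show "ring (free_ring S)" by fact
      show "pi \<in> Ring.ring_hom (free_ring S) (Mat_Z n)" by fact
      show "0 < n" by fact
      show "Rel \<subseteq> carrier (free_ring S)" by fact
    next
      fix m :: "int mat" assume m: "m \<in> carrier_mat n n"
      have "m \<in> h ` carrier (free_ring S Quot J)" using bij_betw_imp_surj_on[OF bij] m by simp
      then obtain c where c: "c \<in> carrier (free_ring S Quot J)" "h c = m" by (rule imageE) simp
      then obtain f where f: "f \<in> carrier (free_ring S)" "c = J +>\<^bsub>free_ring S\<^esub> f"
        unfolding FactRing_def A_RCOSETS_def' by auto
      have "pi f = m" using f c by (simp add: pi_def)
      thus "\<exists>f\<in>carrier (free_ring S). pi f = m" using f(1) by blast
    next
      fix r assume r: "r \<in> Rel"
      have "r \<in> J" using R.genideal_self[OF assms(3)] r by (auto simp: J_def)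
      hence "J +>\<^bsub>free_ring S\<^esub> r = J" using R.a_rcos_zero[OF idJ] by simp
      thus "pi r = 0\<^sub>m n n" using hJ by (simp add: pi_def)
    next
      fix I assume I: "ideal I (free_ring S)" "Rel \<subseteq> I"
      show "{f \<in> carrier (free_ring S). pi f = 0\<^sub>m n n} \<subseteq> I"
      proof
        fix f assume "f \<in> {f \<in> carrier (free_ring S). pi f = 0\<^sub>m n n}"
        hence f: "f \<in> carrier (free_ring S)" "h (J +>\<^bsub>free_ring S\<^esub> f) = h J" using hJ by (auto simp: pi_def)
        have fc: "J +>\<^bsub>free_ring S\<^esub> f \<in> carrier (free_ring S Quot J)"
          using f(1) unfolding FactRing_def A_RCOSETS_def' by auto
        have "J +>\<^bsub>free_ring S\<^esub> f = J"
          using inj_onD[OF bij_betw_imp_inj_on[OF bij] f(2) fc Jcar] .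
        hence "f \<in> J" using J.rcos_const_imp_mem f(1) by blast
        moreover have "J \<subseteq> I" unfolding J_def by (rule R.genideal_minimal[OF I])
        ultimately show "f \<in> I" by blast
      qed
    qed
    show ?thesis using mp.counting[OF mp assms(2) finR] by simp
  qed
qed


end
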